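(* If $2^{\aleph_0}<\aleph_\omega$, then for all but finitely many $n<\omega$, $S^n_0\in J[\aleph_n]$.
   Context: $S^n_0=\{\alpha<\aleph_n\mid\mathrm{cf}(\alpha)=\aleph_0\}$. For regular uncountable $\kappa$, $J[\kappa]$ is the collection of all $S\subseteq\kappa$ for which there exist a club $C\subseteq\kappa$ and functions $f_i:\kappa\to[\kappa]^{<2}$ ($i<\kappa$) such that for every $\alpha\in S\cap C$, every regressive $f:\alpha\to\alpha$ and every cofinal $B\subseteq\alpha$, there is $i<\alpha$ with $\sup\{\beta\in B\mid f(\beta)\in f_i(\beta)\}=\alpha$. *)

theory Defs
  imports Main
begin

text \<open>Ordinals are modelled as elements of a well-ordered type 'a; the ordinal
  alpha is identified with the set of its predecessors.\<close>

definition below :: "'a::wellorder \<Rightarrow> 'a set" where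
  "below a = {x. x < a}"

fun aleph :: "nat \<Rightarrow> 'a::wellorder" where
  "aleph 0 = (LEAST a. infinite (below a))"
| "aleph (Suc n) = (LEAST a. ordLess2 (card_of (below (aleph n))) (card_of (below a)))"

definition cf_omega :: "'a::wellorder \<Rightarrow> bool" where
  "cf_omega a \<longleftrightarrow> (\<exists>s::nat \<Rightarrow> 'a. strict_mono s \<and> (\<forall>n. s n < a) \<and> (\<forall>b<a. \<exists>n. b < s n))"

definition S0 :: "nat \<Rightarrow> 'a::wellorder set" where
  "S0 n = {a. a < aleph n \<and> cf_omega a}"

definition club :: "'a::wellorder \<Rightarrow> 'a set \<Rightarrow> bool" where
  "club k C \<longleftrightarrow> C \<subseteq> below k
     \<and> (\<forall>b<k. \<exists>c\<in>C. b \<le> c)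
     \<and> (\<forall>a<k. (\<exists>x. x < a) \<and> (\<forall>b<a. \<exists>c\<in>C. b < c \<and> c < a) \<longrightarrow> a \<in> C)"

definition regressive_on :: "'a::wellorder \<Rightarrow> ('a \<Rightarrow> 'a) \<Rightarrow> bool" where
  "regressive_on a f \<longleftrightarrow> (\<forall>b<a. f b < a \<and> ((\<exists>x. x < b) \<longrightarrow> f b < b))"

definition cofinal_in :: "'a::wellorder \<Rightarrow> 'a set \<Rightarrow> bool" where
  "cofinal_in a B \<longleftrightarrow> B \<subseteq> below a \<and> (\<forall>b<a. \<exists>c\<in>B. b \<le> c)"

definition sup_eq :: "'a::wellorder set \<Rightarrow> 'a \<Rightarrow> bool" where
  "sup_eq X a \<longleftrightarrow> X \<subseteq> below a \<and> (\<forall>g<a. \<exists>b\<in>X. g < b)"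

definition small_subsets :: "'a::wellorder \<Rightarrow> 'a set set" where
  "small_subsets k = {X. X \<subseteq> below k \<and> finite X \<and> card X < 2}"

definition in_J :: "'a::wellorder \<Rightarrow> 'a set \<Rightarrow> bool" where
  "in_J k S \<longleftrightarrow> S \<subseteq> below k \<and>
    (\<exists>C F. club k C \<and>
       (\<forall>i<k. \<forall>b<k. F i b \<in> small_subsets k) \<and>
       (\<forall>a\<in>S \<inter> C. \<forall>f B. regressive_on a f \<and> cofinal_in a B \<longrightarrow>
           (\<exists>i<a. sup_eq {b\<in>B. f b \<in> F i b} a)))"

end

theory Submission
  imports Defs "HOL-Library.Nat_Bijection"
begin

context includes cardinal_syntax begin

definition emb :: "'a::wellorder \<Rightarrow> 'a \<Rightarrow> 'a \<Rightarrow> 'a" where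
  "emb lam b = (SOME h. inj_on h (below b) \<and> h ` below b \<subseteq> below lam)"

definition Rel :: "'a::wellorder \<Rightarrow> 'a \<Rightarrow> ('a \<times> 'a) set" where
  "Rel lam b = {(emb lam b x, emb lam b y) | x y. x \<le> y \<and> y < b}"

lemma emb_prop:
  assumes "|below b| \<le>o |below lam|"
  shows "inj_on (emb lam b) (below b) \<and> emb lam b ` below b \<subseteq> below lam"
proof -
  have "\<exists>h. inj_on h (below b) \<and> h ` below b \<subseteq> below lam"
    using assms unfolding card_of_ordLeq[symmetric] by blast
  then show ?thesis unfolding emb_def by (rule someI_ex)
qed

lemma Rel_sub:
  assumes "|below b| \<le>o |below lam|"
  shows "Rel lam b \<subseteq> below lam \<times> below lam"
proof
  fix p assume "p \<in> Rel lam b"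
  then obtain x y where p: "p = (emb lam b x, emb lam b y)" "x \<le> y" "y < b"
    unfolding Rel_def by blast
  have "x \<in> below b" "y \<in> below b" using p unfolding below_def by auto
  then show "p \<in> below lam \<times> below lam" using p emb_prop[OF assms] by auto
qed

lemma Rel_neq:
  assumes lt: "b1 < b2"
    and i1: "inj_on (emb lam b1) (below b1)" and i2: "inj_on (emb lam b2) (below b2)"
  shows "Rel lam b1 \<noteq> Rel lam b2"
proof
  assume eq: "Rel lam b1 = Rel lam b2"
  let ?e1 = "emb lam b1" and ?e2 = "emb lam b2"
  define phi where "phi x = inv_into (below b1) ?e1 (?e2 x)" for x
  have mem: "?e2 x \<in> ?e1 ` below b1" if "x < b2" for x
  proof -
    have "(?e2 x, ?e2 x) \<in> Rel lam b2" unfolding Rel_def using that by blast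
    then have "(?e2 x, ?e2 x) \<in> Rel lam b1" using eq by simp
    then obtain x' y' where "(?e2 x, ?e2 x) = (?e1 x', ?e1 y')" "x' \<le> y'" "y' < b1"
      unfolding Rel_def by blast
    then show ?thesis unfolding below_def by auto
  qed
  have phi1: "phi x < b1" "?e1 (phi x) = ?e2 x" if "x < b2" for x
    using mem[OF that] inv_into_into[of "?e2 x" ?e1 "below b1"] f_inv_into_f[of "?e2 x" ?e1 "below b1"]
    unfolding phi_def below_def by auto
  have mono: "phi x < phi y" if "x < y" "y < b2" for x y
  proof -
    have "x < b2" using that by simp
    have "(?e2 x, ?e2 y) \<in> Rel lam b2" unfolding Rel_def using that by force
    then have "(?e2 x, ?e2 y) \<in> Rel lam b1" using eq by simp
    then obtain x' y' where xy: "?e2 x = ?e1 x'" "?e2 y = ?e1 y'" "x' \<le> y'" "y' < b1"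
      unfolding Rel_def by blast
    have "x' = phi x"
      using i1 xy phi1[OF \<open>x < b2\<close>] unfolding inj_on_def below_def by auto
    moreover have "y' = phi y"
      using i1 xy phi1[OF \<open>y < b2\<close>] unfolding inj_on_def below_def by auto
    moreover have "phi x \<noteq> phi y"
    proof
      assume "phi x = phi y"
      then have "?e2 x = ?e2 y" using phi1 \<open>x < b2\<close> \<open>y < b2\<close> by metis
      then have "x = y" using i2 \<open>x < b2\<close> \<open>y < b2\<close> unfolding inj_on_def below_def by auto
      then show False using that by simp
    qed
    ultimately show ?thesis using xy by auto
  qed
  have ge: "x < b2 \<longrightarrow> x \<le> phi x" for x
  proof (induction x rule: less_induct)
    case (less x)
    show ?case
    proof
      assume x: "x < b2"
      show "x \<le> phi x"
      proof (rule ccontr)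
        assume "\<not> x \<le> phi x"
        then have y: "phi x < x" by simp
        then have "phi x \<le> phi (phi x)" using less x by auto
        moreover have "phi (phi x) < phi x" using mono[OF y x] .
        ultimately show False by simp
      qed
    qed
  qed
  have "b1 \<le> phi b1" using ge lt by blast
  moreover have "phi b1 < b1" using phi1 lt by blast
  ultimately show False by simp
qed

lemma subsingleton_small:
  assumes "\<forall>x\<in>S. \<forall>y\<in>S. x = y"
  shows "finite S \<and> card S < 2"
proof (cases "S = {}")
  case False
  then obtain x where "x \<in> S" by blast
  then have "S = {x}" using assms by blast
  then show ?thesis by simp
qed simp


type_synonym 'a idx = "(nat \<Rightarrow> 'a \<times> 'a) \<times> (nat \<Rightarrow> nat \<Rightarrow> bool) \<times> (nat \<Rightarrow> 'a)"

definition IT :: "'a::wellorder \<Rightarrow> 'a idx set" where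
  "IT lam = {(d,ks,ys). (\<forall>j. fst (d j) < lam \<and> snd (d j) < lam) \<and> (\<forall>j. ys j < lam)}"

definition keyf :: "'a::wellorder \<Rightarrow> (nat \<Rightarrow> 'a \<times> 'a) \<Rightarrow> 'a \<Rightarrow> nat \<Rightarrow> bool" where
  "keyf lam d b = (\<lambda>j. d j \<in> Rel lam b)"

definition Fx :: "'a::wellorder \<Rightarrow> 'a idx \<Rightarrow> 'a \<Rightarrow> 'a set" where
  "Fx lam t b = (case t of (d,ks,ys) \<Rightarrow>
     if (\<exists>k. ks k = keyf lam d b)
     then {z. z < b \<and> emb lam b z = ys (LEAST k. ks k = keyf lam d b)} else {})"

lemma Fx_small:
  assumes "b < kap" "|below b| \<le>o |below lam|"
  shows "Fx lam t b \<in> small_subsets kap"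
proof -
  obtain d ks ys where t: "t = (d,ks,ys)" by (cases t) auto
  have "\<exists>y. Fx lam t b \<subseteq> {z. z < b \<and> emb lam b z = y}"
    unfolding Fx_def t by auto
  then obtain y where y: "Fx lam t b \<subseteq> {z. z < b \<and> emb lam b z = y}" by blast
  have inj: "inj_on (emb lam b) (below b)" using emb_prop[OF assms(2)] by blast
  have "\<forall>x\<in>Fx lam t b. \<forall>x'\<in>Fx lam t b. x = x'"
    using y inj unfolding inj_on_def below_def by blast
  then have "finite (Fx lam t b) \<and> card (Fx lam t b) < 2" by (rule subsingleton_small)
  moreover have "Fx lam t b \<subseteq> below kap" using y assms(1) unfolding below_def by auto
  ultimately show ?thesis unfolding small_subsets_def by blast
qed

lemma J_main:
  fixes lam kap :: "'a::wellorder"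
  assumes lk: "lam < kap"
    and sm: "\<forall>b<kap. |below b| \<le>o |below lam|"
    and itc: "|IT lam| \<le>o |below lam|"
    and ne: "x0 < lam"
  shows "in_J kap {a. a < kap \<and> cf_omega a}"
proof -
  obtain enc where enc: "inj_on enc (IT lam)" "enc ` IT lam \<subseteq> below lam"
    using itc unfolding card_of_ordLeq[symmetric] by blast
  define C where "C = {a. lam \<le> a \<and> a < kap}"
  define F where "F i b = (if i \<in> enc ` IT lam then Fx lam (inv_into (IT lam) enc i) b else {})"
    for i b
  have club: "club kap C"
    unfolding club_def
  proof (intro conjI allI impI)
    show "C \<subseteq> below kap" unfolding C_def below_def by blast
  next
    fix b assume b: "b < kap"
    have "max b lam \<in> C" using b lk unfolding C_def by (cases "b \<le> lam") (auto simp: max_def)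
    moreover have "b \<le> max b lam" by simp
    ultimately show "\<exists>c\<in>C. b \<le> c" by blast
  next
    fix a assume a: "a < kap" and h: "(\<exists>x. x < a) \<and> (\<forall>b<a. \<exists>c\<in>C. b < c \<and> c < a)"
    then obtain x where "x < a" by blast
    then obtain c where "c \<in> C" "c < a" using h by blast
    then show "a \<in> C" using a unfolding C_def by (auto intro: order.trans less_imp_le)
  qed
  have small: "\<forall>i<kap. \<forall>b<kap. F i b \<in> small_subsets kap"
  proof (intro allI impI)
    fix i b assume b: "b < kap"
    show "F i b \<in> small_subsets kap"
    proof (cases "i \<in> enc ` IT lam")
      case True
      then show ?thesis unfolding F_def using Fx_small[OF b] sm b by simp
    next
      case False
      then show ?thesis unfolding F_def small_subsets_def by simp
    qed
  qed
  have main: "\<exists>i<a. sup_eq {b\<in>B. f b \<in> F i b} a"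
    if a: "a \<in> {a. a < kap \<and> cf_omega a} \<inter> C" and f: "regressive_on a f" and B: "cofinal_in a B"
    for a f B
  proof -
    have ak: "a < kap" and la: "lam \<le> a" and cf: "cf_omega a" using a unfolding C_def by auto
    obtain s :: "nat \<Rightarrow> 'a" where s: "strict_mono s" "\<forall>n. s n < a" "\<forall>b<a. \<exists>n. b < s n"
      using cf unfolding cf_omega_def by blast
    have "\<forall>k. \<exists>c. c \<in> B \<and> s (Suc k) \<le> c"
      using B s(2) unfolding cofinal_in_def by blast
    then obtain beta where "\<forall>k. beta k \<in> B \<and> s (Suc k) \<le> beta k"
      by (metis (mono_tags))
    then have beta: "\<And>k. beta k \<in> B" "\<And>k. s (Suc k) \<le> beta k" by auto
    have ba: "beta k < a" for k using beta(1) B unfolding cofinal_in_def below_def by blast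
    have bk: "beta k < kap" for k using ba ak by (meson less_trans)
    have fb: "f (beta k) < beta k" for k
    proof -
      have "s 0 < s (Suc k)" using s(1) by (simp add: strict_mono_def)
      then have "s 0 < beta k" using beta(2)[of k] by simp
      then show ?thesis using f ba[of k] unfolding regressive_on_def by blast
    qed
    have embk: "inj_on (emb lam (beta k)) (below (beta k)) \<and> emb lam (beta k) ` below (beta k) \<subseteq> below lam" for k
      using emb_prop sm bk by blast
    have relneq: "Rel lam (beta k) \<noteq> Rel lam (beta l)" if "beta k \<noteq> beta l" for k l
    proof (cases "beta k < beta l")
      case True
      show ?thesis by (rule Rel_neq[OF True conjunct1[OF embk[of k]] conjunct1[OF embk[of l]]])
    next
      case False
      then have lt: "beta l < beta k" using that by simp
      show ?thesis using Rel_neq[OF lt conjunct1[OF embk[of l]] conjunct1[OF embk[of k]]] by simp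
    qed
    define Dl where "Dl k l = {p. (p \<in> Rel lam (beta k)) \<noteq> (p \<in> Rel lam (beta l))}" for k l
    define w where "w k l = (if Dl k l \<noteq> {} then SOME p. p \<in> Dl k l else (x0,x0))" for k l
    have wD: "w k l \<in> Dl k l" if "beta k \<noteq> beta l" for k l
    proof -
      have "Dl k l \<noteq> {}" using relneq[OF that] unfolding Dl_def by blast
      then show ?thesis unfolding w_def by (simp add: some_in_eq)
    qed
    have wL: "fst (w k l) < lam \<and> snd (w k l) < lam" for k l
    proof (cases "Dl k l = {}")
      case True then show ?thesis using ne unfolding w_def by simp
    next
      case False
      then have "w k l \<in> Dl k l" unfolding w_def by (simp add: some_in_eq)
      then have "w k l \<in> Rel lam (beta k) \<union> Rel lam (beta l)" unfolding Dl_def by auto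
      moreover have "Rel lam (beta k) \<subseteq> below lam \<times> below lam"
        using Rel_sub sm bk by blast
      moreover have "Rel lam (beta l) \<subseteq> below lam \<times> below lam"
        using Rel_sub sm bk by blast
      ultimately have "w k l \<in> below lam \<times> below lam" by blast
      then show ?thesis unfolding below_def by (cases "w k l") auto
    qed
    define d where "d j = w (fst (prod_decode j)) (snd (prod_decode j))" for j
    have keyneq: "keyf lam d (beta k) \<noteq> keyf lam d (beta l)" if "beta k \<noteq> beta l" for k l
    proof
      assume "keyf lam d (beta k) = keyf lam d (beta l)"
      then have "keyf lam d (beta k) (prod_encode (k,l)) = keyf lam d (beta l) (prod_encode (k,l))"
        by simp
      then have "(w k l \<in> Rel lam (beta k)) = (w k l \<in> Rel lam (beta l))"
        unfolding keyf_def d_def by simp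
      then show False using wD[OF that] unfolding Dl_def by simp
    qed
    define ks where "ks k = keyf lam d (beta k)" for k
    define ys where "ys k = emb lam (beta k) (f (beta k))" for k
    define t where "t = (d, ks, ys)"
    have tIT: "t \<in> IT lam"
    proof -
      have "ys k < lam" for k
        using embk[of k] fb[of k] unfolding ys_def below_def by blast
      then show ?thesis unfolding IT_def t_def d_def using wL by auto
    qed
    define i where "i = enc t"
    have il: "i < lam" using enc(2) tIT unfolding i_def below_def by blast
    have Fi: "F i b = Fx lam t b" for b
      unfolding F_def i_def using tIT enc(1) by simp
    have hit: "f (beta k) \<in> F i (beta k)" for k
    proof -
      have ex: "\<exists>k'. ks k' = keyf lam d (beta k)" unfolding ks_def by blast
      define k0 where "k0 = (LEAST k'. ks k' = keyf lam d (beta k))"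
      have "ks k0 = keyf lam d (beta k)" unfolding k0_def using LeastI_ex[OF ex] .
      then have "beta k0 = beta k" using keyneq unfolding ks_def by metis
      then have "ys k0 = emb lam (beta k) (f (beta k))" unfolding ys_def by simp
      then show ?thesis unfolding Fi t_def Fx_def using ex fb[of k] k0_def by auto
    qed
    have "sup_eq {b\<in>B. f b \<in> F i b} a"
      unfolding sup_eq_def
    proof (intro conjI allI impI)
      show "{b \<in> B. f b \<in> F i b} \<subseteq> below a" using B unfolding cofinal_in_def by blast
    next
      fix g assume "g < a"
      then obtain n where "g < s n" using s(3) by blast
      moreover have "s n < s (Suc n)" using s(1) by (simp add: strict_mono_def)
      ultimately have "g < beta n" using beta(2)[of n] by (meson less_le_trans less_trans)
      then show "\<exists>b\<in>{b \<in> B. f b \<in> F i b}. g < b" using beta(1) hit by blast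
    qed
    then show ?thesis using il la by (meson less_le_trans)
  qed
  show ?thesis unfolding in_J_def
  proof (intro conjI exI)
    show "{a. a < kap \<and> cf_omega a} \<subseteq> below kap" unfolding below_def by blast
    show "club kap C" by (rule club)
    show "\<forall>i<kap. \<forall>b<kap. F i b \<in> small_subsets kap" by (rule small)
    show "\<forall>a\<in>{a. a < kap \<and> cf_omega a} \<inter> C. \<forall>f B. regressive_on a f \<and> cofinal_in a B \<longrightarrow> (\<exists>i<a. sup_eq {b\<in>B. f b \<in> F i b} a)"
      using main by blast
  qed
qed

end

context includes cardinal_syntax begin

definition SEQ :: "'a::wellorder \<Rightarrow> (nat \<Rightarrow> 'a) set" where
  "SEQ a = {g. \<forall>j. g j < a}"

lemma times_le_inf:
  assumes "infinite L" "|A| \<le>o |L|" "|B| \<le>o |L|"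
  shows "|A \<times> B| \<le>o |L|"
  using card_of_Times_ordLeq_infinite_Field[of "|L|" A B, OF _ _ _ card_of_Card_order] assms
  unfolding Field_card_of by blast

lemma un_le_inf:
  assumes "infinite L" "|A| \<le>o |L|" "|B| \<le>o |L|"
  shows "|A \<union> B| \<le>o |L|"
  using card_of_Un_ordLeq_infinite_Field[of "|L|" A B, OF _ _ _ card_of_Card_order] assms
  unfolding Field_card_of by blast

lemma aleph0_inf:
  assumes "\<exists>a::'a::wellorder. infinite (below a)"
  shows "infinite (below (aleph 0 :: 'a))"
  using LeastI_ex[OF assms] by simp

lemma aleph0_fin: "(a::'a::wellorder) < aleph 0 \<Longrightarrow> finite (below a)"
  using not_less_Least[of a "\<lambda>a. infinite (below a)"] by simp

lemma aleph_Suc_gt_card: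
  assumes "\<exists>a::'a::wellorder. |below (aleph n :: 'a)| <o |below a|"
  shows "|below (aleph n :: 'a)| <o |below (aleph (Suc n) :: 'a)|"
  using LeastI_ex[OF assms] by simp

lemma below_aleph_Suc:
  assumes "(a::'a::wellorder) < aleph (Suc n)"
  shows "|below a| \<le>o |below (aleph n :: 'a)|"
proof -
  have "\<not> |below (aleph n :: 'a)| <o |below a|"
    using assms not_less_Least[of a "\<lambda>a. |below (aleph n :: 'a)| <o |below a|"] by simp
  then show ?thesis using ordLess_or_ordLeq[OF card_of_Well_order card_of_Well_order] by blast
qed

lemma aleph_lt_Suc:
  assumes A2: "\<forall>n. \<exists>a::'a::wellorder. |below (aleph n :: 'a)| <o |below a|"
  shows "aleph n < (aleph (Suc n) :: 'a)"
proof (rule ccontr)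
  assume "\<not> aleph n < (aleph (Suc n) :: 'a)"
  then have "below (aleph (Suc n) :: 'a) \<subseteq> below (aleph n)" unfolding below_def by auto
  then have "|below (aleph (Suc n) :: 'a)| \<le>o |below (aleph n :: 'a)|" by (rule card_of_mono1)
  then show False using aleph_Suc_gt_card[of n] A2 not_ordLess_ordLeq by blast
qed

lemma aleph_mono:
  assumes A2: "\<forall>n. \<exists>a::'a::wellorder. |below (aleph n :: 'a)| <o |below a|"
    and "m \<le> n"
  shows "aleph m \<le> (aleph n :: 'a)"
proof (rule lift_Suc_mono_le[of aleph, OF _ assms(2)])
  fix k show "aleph k \<le> (aleph (Suc k) :: 'a)" using aleph_lt_Suc[OF A2, of k] by simp
qed

lemma K_inf:
  assumes A1: "\<exists>a::'a::wellorder. infinite (below a)"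
    and A2: "\<forall>n. \<exists>a::'a::wellorder. |below (aleph n :: 'a)| <o |below a|"
  shows "infinite (below (aleph n :: 'a))"
proof -
  have "below (aleph 0 :: 'a) \<subseteq> below (aleph n)"
    using aleph_mono[OF A2, of 0 n] unfolding below_def by auto
  then show ?thesis using aleph0_inf[OF A1] finite_subset by blast
qed

lemma SEQ_bound:
  assumes A1: "\<exists>a::'a::wellorder. infinite (below a)"
    and A2: "\<forall>n. \<exists>a::'a::wellorder. |below (aleph n :: 'a)| <o |below a|"
  shows "|SEQ (aleph m :: 'a)| \<le>o |below (aleph m :: 'a) \<times> Pow (UNIV :: nat set)|"
proof (induction m)
  case 0
  let ?K = "below (aleph 0 :: 'a)"
  define c where "c x = card (below x)" for x :: 'a
  have cinj: "inj_on c ?K"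
  proof (rule inj_onI)
    fix x y assume x: "x \<in> ?K" and y: "y \<in> ?K" and eq: "c x = c y"
    show "x = y"
    proof (rule ccontr)
      assume ne: "x \<noteq> y"
      have lt: "c u < c v" if "u \<in> ?K" "v \<in> ?K" "u < v" for u v
      proof -
        have "below u \<subset> below v" using that unfolding below_def by auto
        moreover have "finite (below v)" using that aleph0_fin unfolding below_def by blast
        ultimately show ?thesis unfolding c_def by (rule psubset_card_mono[rotated])
      qed
      show False
      proof (cases "x < y")
        case True then show False using lt[OF x y] eq by simp
      next
        case False then have "y < x" using ne by simp
        then show False using lt[OF y x] eq by simp
      qed
    qed
  qed
  have "?K \<noteq> {}" using aleph0_inf[OF A1] by auto
  then obtain x0 where x0: "x0 \<in> ?K" by blast
  define G where "G g = (x0, {prod_encode (j, c (g j)) | j. True})" for g :: "nat \<Rightarrow> 'a"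
  have "inj_on G (SEQ (aleph 0 :: 'a))"
  proof (rule inj_onI)
    fix g g' assume g: "g \<in> SEQ (aleph 0 :: 'a)" and g': "g' \<in> SEQ (aleph 0 :: 'a)" and eq: "G g = G g'"
    have "g j = g' j" for j
    proof -
      have se: "{prod_encode (j, c (g j)) | j. True} = {prod_encode (j, c (g' j)) | j. True}"
        using eq unfolding G_def by simp
      have "prod_encode (j, c (g j)) \<in> {prod_encode (j, c (g j)) | j. True}" by blast
      then have "prod_encode (j, c (g j)) \<in> {prod_encode (j, c (g' j)) | j. True}"
        unfolding se[symmetric] .
      then obtain j' where "prod_encode (j, c (g j)) = prod_encode (j', c (g' j'))" by blast
      then have "j = j'" "c (g j) = c (g' j')" using prod_encode_eq by auto
      then have "c (g j) = c (g' j)" by simp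
      moreover have "g j \<in> ?K" "g' j \<in> ?K" using g g' unfolding SEQ_def below_def by auto
      ultimately show ?thesis using cinj unfolding inj_on_def by blast
    qed
    then show "g = g'" by auto
  qed
  moreover have "G g \<in> ?K \<times> Pow UNIV" for g unfolding G_def using x0 by simp
  ultimately show ?case by (rule card_of_ordLeqI[of G])
next
  case (Suc m)
  let ?K = "below (aleph m :: 'a)" and ?K' = "below (aleph (Suc m) :: 'a)"
  let ?P = "Pow (UNIV :: nat set)"
  have "\<exists>h. inj_on h (SEQ (aleph m :: 'a)) \<and> h ` SEQ (aleph m :: 'a) \<subseteq> ?K \<times> ?P"
    by (simp only: card_of_ordLeq Suc.IH)
  then obtain h where h: "inj_on h (SEQ (aleph m :: 'a))" "h ` SEQ (aleph m :: 'a) \<subseteq> ?K \<times> ?P"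
    by (elim exE conjE) (rule that)
  have Kinf: "infinite ?K" using K_inf[OF A1 A2] .
  have K'inf: "infinite ?K'" using K_inf[OF A1 A2] .
  have KK': "?K \<subseteq> ?K'" using aleph_lt_Suc[OF A2, of m] unfolding below_def by auto
  have bnd: "\<exists>d<aleph (Suc m). \<forall>j. g j < d" if g: "g \<in> SEQ (aleph (Suc m) :: 'a)" for g
  proof (rule ccontr)
    assume "\<not> (\<exists>d<aleph (Suc m). \<forall>j. g j < d)"
    then have cov: "\<forall>d<aleph (Suc m). \<exists>j. d \<le> g j" using not_less by blast
    have "?K' \<subseteq> (\<Union>j\<in>UNIV. {g j} \<union> below (g j))"
    proof
      fix x assume "x \<in> ?K'"
      then obtain j where "x \<le> g j" using cov unfolding below_def by blast
      then have "x \<in> {g j} \<union> below (g j)" unfolding below_def by (cases "x = g j") auto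
      then show "x \<in> (\<Union>j\<in>UNIV. {g j} \<union> below (g j))" by blast
    qed
    moreover have "|\<Union>j\<in>UNIV. {g j} \<union> below (g j)| \<le>o |?K|"
    proof (rule card_of_UNION_ordLeq_infinite[OF Kinf])
      show "|UNIV :: nat set| \<le>o |?K|" using Kinf infinite_iff_card_of_nat by blast
      show "\<forall>j\<in>UNIV. |{g j} \<union> below (g j)| \<le>o |?K|"
      proof
        fix j :: nat
        have gj: "g j < aleph (Suc m)" using g unfolding SEQ_def by blast
        have "?K \<noteq> {}" using Kinf by auto
        then have "|{g j}| \<le>o |?K|" by (rule card_of_singl_ordLeq)
        moreover have "|below (g j)| \<le>o |?K|" using below_aleph_Suc[OF gj] .
        ultimately show "|{g j} \<union> below (g j)| \<le>o |?K|"
          by (rule un_le_inf[OF Kinf])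
      qed
    qed
    ultimately have "|?K'| \<le>o |?K|" by (rule ordLeq_transitive[OF card_of_mono1])
    then show False using aleph_Suc_gt_card[of m] A2 not_ordLess_ordLeq by blast
  qed
  define dl where "dl g = (LEAST d. \<forall>j. g j < d)" for g :: "nat \<Rightarrow> 'a"
  have dl: "dl g < aleph (Suc m)" "\<forall>j. g j < dl g" if gS: "g \<in> SEQ (aleph (Suc m) :: 'a)" for g
  proof -
    obtain d :: 'a where d: "d < aleph (Suc m)" "\<forall>j. g j < d" using bnd[OF gS] by blast
    have "dl g \<le> d" unfolding dl_def using d(2) by (rule Least_le)
    then show "dl g < aleph (Suc m)" using d(1) by simp
    show "\<forall>j. g j < dl g" unfolding dl_def using d(2) by (rule LeastI)
  qed
  define pg where "pg g = (\<lambda>j. emb (aleph m) (dl g) (g j))" for g :: "nat \<Rightarrow> 'a"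
  have embd: "inj_on (emb (aleph m) (dl g)) (below (dl g)) \<and> emb (aleph m) (dl g) ` below (dl g) \<subseteq> ?K"
    if "g \<in> SEQ (aleph (Suc m) :: 'a)" for g
    by (rule emb_prop[OF below_aleph_Suc[OF dl(1)[OF that]]])
  have pgS: "pg g \<in> SEQ (aleph m :: 'a)" if "g \<in> SEQ (aleph (Suc m) :: 'a)" for g
  proof -
    have "emb (aleph m) (dl g) (g j) \<in> ?K" for j
    proof -
      have "g j \<in> below (dl g)" using dl(2)[OF that] unfolding below_def by simp
      then show ?thesis using embd[OF that] by blast
    qed
    then show ?thesis unfolding pg_def SEQ_def below_def by simp
  qed
  define G where "G g = ((dl g, fst (h (pg g))), snd (h (pg g)))" for g
  have "inj_on G (SEQ (aleph (Suc m) :: 'a))"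
  proof (rule inj_onI)
    fix g g' assume g: "g \<in> SEQ (aleph (Suc m) :: 'a)" and g': "g' \<in> SEQ (aleph (Suc m) :: 'a)"
      and eq: "G g = G g'"
    have dd: "dl g = dl g'" using eq unfolding G_def by simp
    have "h (pg g) = h (pg g')" using eq unfolding G_def by (simp add: prod_eq_iff)
    then have "pg g = pg g'" using h(1) pgS[OF g] pgS[OF g'] unfolding inj_on_def by blast
    then have "emb (aleph m) (dl g) (g j) = emb (aleph m) (dl g) (g' j)" for j
      using fun_cong[of "pg g" "pg g'" j] unfolding pg_def dd by simp
    moreover have "g j \<in> below (dl g)" "g' j \<in> below (dl g)" for j
      using dl(2)[OF g] dl(2)[OF g'] dd unfolding below_def by auto
    ultimately have "g j = g' j" for j using embd[OF g] unfolding inj_on_def by blast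
    then show "g = g'" by auto
  qed
  moreover have "G g \<in> (?K' \<times> ?K) \<times> ?P" if "g \<in> SEQ (aleph (Suc m) :: 'a)" for g
  proof -
    have "h (pg g) \<in> ?K \<times> ?P" using h(2) pgS[OF that] by blast
    moreover have "dl g \<in> ?K'" using dl(1)[OF that] unfolding below_def by simp
    ultimately show ?thesis unfolding G_def by (simp add: mem_Times_iff)
  qed
  ultimately have "|SEQ (aleph (Suc m) :: 'a)| \<le>o |(?K' \<times> ?K) \<times> ?P|"
    by (rule card_of_ordLeqI[of G]) blast
  moreover have "|?K' \<times> ?K| \<le>o |?K'|"
    using times_le_inf[OF K'inf card_of_mono1[OF subset_refl] card_of_mono1[OF KK']] .
  then have "|(?K' \<times> ?K) \<times> ?P| \<le>o |?K' \<times> ?P|" by (rule card_of_Times_mono1)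
  ultimately show ?case by (rule ordLeq_transitive)
qed

lemma IT_bound:
  assumes inf: "infinite (below lam)" and sq: "|SEQ lam| \<le>o |below lam|"
    and pw: "|Pow (UNIV :: nat set)| \<le>o |below (lam::'a::wellorder)|"
  shows "|IT lam| \<le>o |below lam|"
proof -
  define ksc where "ksc ks = {prod_encode (a,b) | a b. ks a b}" for ks :: "nat \<Rightarrow> nat \<Rightarrow> bool"
  have ksc: "ks a b \<longleftrightarrow> prod_encode (a,b) \<in> ksc ks" for ks a b
    unfolding ksc_def using prod_encode_eq by auto
  define G where "G t = (case t of (d,ks,ys) \<Rightarrow> (fst \<circ> d, snd \<circ> d, ksc ks, ys))" for t :: "'a idx"
  have "inj_on G (IT lam)"
  proof (rule inj_onI)
    fix t t' :: "'a idx" assume "G t = G t'"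
    moreover obtain d ks ys where t: "t = (d,ks,ys)" by (cases t) auto
    moreover obtain d' ks' ys' where t': "t' = (d',ks',ys')" by (cases t') auto
    ultimately have e: "fst \<circ> d = fst \<circ> d'" "snd \<circ> d = snd \<circ> d'" "ksc ks = ksc ks'" "ys = ys'"
      unfolding G_def by auto
    have "d = d'"
    proof
      fix j
      have "fst (d j) = fst (d' j)" using fun_cong[OF e(1), of j] by simp
      moreover have "snd (d j) = snd (d' j)" using fun_cong[OF e(2), of j] by simp
      ultimately show "d j = d' j" by (rule prod_eqI)
    qed
    moreover have "ks = ks'"
    proof (intro ext)
      fix a b show "ks a b = ks' a b" using ksc[of ks a b] ksc[of ks' a b] e(3) by simp
    qed
    ultimately show "t = t'" using t t' e(4) by simp
  qed
  moreover have "G t \<in> SEQ lam \<times> SEQ lam \<times> Pow UNIV \<times> SEQ lam" if "t \<in> IT lam" for t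
    using that unfolding G_def IT_def SEQ_def by auto
  ultimately have "|IT lam| \<le>o |SEQ lam \<times> SEQ lam \<times> Pow (UNIV :: nat set) \<times> SEQ lam|"
    by (rule card_of_ordLeqI[of G]) blast
  moreover have "|SEQ lam \<times> SEQ lam \<times> Pow (UNIV :: nat set) \<times> SEQ lam| \<le>o |below lam|"
    by (intro times_le_inf[OF inf] sq pw)
  ultimately show ?thesis by (rule ordLeq_transitive)
qed

end

theorem corollary5p6:
  assumes "\<exists>a::'a::wellorder. infinite (below a)"
    and "\<forall>n. \<exists>a::'a. ordLess2 (card_of (below (aleph n :: 'a))) (card_of (below a))"
    and "\<exists>n. ordLess2 (card_of (Pow (UNIV :: nat set))) (card_of (below (aleph n :: 'a)))"
  shows "finite {n. \<not> in_J (aleph n :: 'a) (S0 n)}"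
proof -
  note A1 = assms(1) and A2 = assms(2)
  obtain N where N: "ordLess2 (card_of (Pow (UNIV :: nat set))) (card_of (below (aleph N :: 'a)))"
    using assms(3) by blast
  have "in_J (aleph n :: 'a) (S0 n)" if "N < n" for n
  proof -
    obtain m where n: "n = Suc m" and mN: "N \<le> m" using \<open>N < n\<close> by (cases n) auto
    let ?L = "below (aleph m :: 'a)"
    have Linf: "infinite ?L" using K_inf[OF A1 A2] .
    have "below (aleph N :: 'a) \<subseteq> ?L" using aleph_mono[OF A2 mN] unfolding below_def by auto
    then have pw: "ordLeq3 (card_of (Pow (UNIV :: nat set))) (card_of ?L)"
      by (rule ordLeq_transitive[OF ordLess_imp_ordLeq[OF N] card_of_mono1])
    have sq: "ordLeq3 (card_of (SEQ (aleph m :: 'a))) (card_of ?L)"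
      by (rule ordLeq_transitive[OF SEQ_bound[OF A1 A2, of m] times_le_inf[OF Linf card_of_mono1[OF subset_refl] pw]])
    have itc: "ordLeq3 (card_of (IT (aleph m :: 'a))) (card_of ?L)"
      using IT_bound[OF Linf sq pw] .
    have "?L \<noteq> {}" using Linf by auto
    then obtain x0 where "x0 \<in> ?L" by blast
    then have x0: "x0 < (aleph m :: 'a)" unfolding below_def by simp
    have "in_J (aleph (Suc m) :: 'a) {a. a < aleph (Suc m) \<and> cf_omega a}"
      by (rule J_main[OF aleph_lt_Suc[OF A2] _ itc x0]) (use below_aleph_Suc in blast)
    then show ?thesis unfolding n S0_def .
  qed
  then have "{n. \<not> in_J (aleph n :: 'a) (S0 n)} \<subseteq> {..N}"
    by (auto simp: not_less[symmetric])
  then show ?thesis using finite_subset by blast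
qed

end
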